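(* The set $\{x\in V: 0\in\overline{A\cdot x}\}$ is a real algebraic subset of $V$; in particular it is closed.
   Context: Let $V$ be a finite-dimensional real vector space with a scalar product. Let $G\subset\mathrm{GL}(V)$ be a connected closed subgroup, closed under transpose, with Lie algebra $\mathfrak g$, $G=K\exp(\mathfrak p)$ with $K=G\cap\mathrm O(V)$, $\mathfrak p=\mathfrak g\cap\mathrm{Sym}(V)$. Let $\mathfrak a\subset\mathfrak p$ be an Abelian subalgebra and $A=\exp(\mathfrak a)$, acting linearly on $V$. *)

theory Defs
  imports "HOL-Analysis.Analysis"
begin

primrec matpow :: "real^'n^'n \<Rightarrow> nat \<Rightarrow> real^'n^'n" where
  "matpow X 0 = mat 1"
| "matpow X (Suc k) = X ** matpow X k"

definition mexp :: "real^'n^'n \<Rightarrow> real^'n^'n" where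
  "mexp X = (\<Sum>k. (1 / fact k) *\<^sub>R matpow X k)"

inductive_set poly_fun :: "(real^'n \<Rightarrow> real) set" where
  const: "(\<lambda>x. c) \<in> poly_fun"
| coord: "(\<lambda>x. x $ i) \<in> poly_fun"
| add: "p \<in> poly_fun \<Longrightarrow> q \<in> poly_fun \<Longrightarrow> (\<lambda>x. p x + q x) \<in> poly_fun"
| mult: "p \<in> poly_fun \<Longrightarrow> q \<in> poly_fun \<Longrightarrow> (\<lambda>x. p x * q x) \<in> poly_fun"

definition real_algebraic_set :: "(real^'n) set \<Rightarrow> bool" where
  "real_algebraic_set S \<longleftrightarrow>
     (\<exists>P. finite P \<and> P \<subseteq> poly_fun \<and> S = {x. \<forall>p\<in>P. p x = 0})"

end

theory Submission
  imports Defs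
begin


lemma sym_inner:
  fixes X :: "real^'n^'n"
  assumes "transpose X = X"
  shows "inner (X *v v) w = inner v (X *v w)"
proof -
  have "X *v v = v v* X" using transpose_matrix_vector[of X v] assms by simp
  then show ?thesis by (simp add: dot_lmul_matrix)
qed

lemma quad_nonpos_imp:
  fixes a b :: real
  assumes "\<And>t. 2*t*a + t^2*b \<le> 0"
  shows "a = 0"
proof (rule ccontr)
  assume a: "a \<noteq> 0"
  define c where "c = \<bar>b\<bar> + 1"
  have c: "c > 0" unfolding c_def by simp
  have "2*(a/c)*a + (a/c)^2*b = a^2*(2*c+b)/c^2"
    using c by (simp add: field_simps power2_eq_square)
  moreover have "2*c+b > 0" by (cases "b \<ge> 0") (simp_all add: c_def)
  moreover have "a^2 > 0" using a by simp
  ultimately have "2*(a/c)*a + (a/c)^2*b > 0" using c by simp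
  with assms[of "a/c"] show False by simp
qed

lemma sym_eigvec:
  fixes X :: "real^'n^'n"
  assumes sym: "transpose X = X" and W: "subspace W"
    and inv: "\<And>w. w \<in> W \<Longrightarrow> X *v w \<in> W" and ne: "W \<noteq> {0}"
  shows "\<exists>u\<in>W. norm u = 1 \<and> X *v u = inner u (X *v u) *\<^sub>R u"
proof -
  define f where "f = (\<lambda>v. inner v (X *v v))"
  define K where "K = W \<inter> sphere 0 1"
  have "compact K" unfolding K_def
    by (simp add: W closed_Int_compact closed_subspace)
  moreover have "K \<noteq> {}"
  proof -
    obtain w where w: "w \<in> W" "w \<noteq> 0" using ne W subspace_0 by blast
    have "w /\<^sub>R norm w \<in> K" unfolding K_def using w W
      by (simp add: subspace_scale)
    then show ?thesis by blast
  qed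
  moreover have "continuous_on K f" unfolding f_def
    by (intro continuous_intros linear_continuous_on linear_conv_bounded_linear[THEN iffD1]) simp
  ultimately obtain u where u: "u \<in> K" and umax: "\<And>y. y \<in> K \<Longrightarrow> f y \<le> f u"
    using continuous_attains_sup[of K f] by blast
  define \<mu> where "\<mu> = f u"
  have uW: "u \<in> W" and nu: "norm u = 1" using u unfolding K_def by auto
  have uu: "inner u u = 1" using nu by (simp add: norm_eq_sqrt_inner)
  have key: "inner w (X *v u) = 0" if wW: "w \<in> W" and wu: "inner w u = 0" for w
  proof -
    define a where "a = inner w (X *v u)"
    define b where "b = inner w (X *v w) - \<mu> * inner w w"
    have "2*t*a + t^2*b \<le> 0" for t
    proof -
      define v where "v = u + t *\<^sub>R w"
      have vW: "v \<in> W" unfolding v_def using uW wW W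
        by (simp add: subspace_add subspace_scale)
      have vv: "inner v v = 1 + t^2 * inner w w" unfolding v_def
        using uu wu by (simp add: inner_add_left inner_add_right inner_commute power2_eq_square)
      have vpos: "inner v v > 0" unfolding vv
        by (simp add: add_pos_nonneg)
      hence nv: "norm v > 0" by (simp add: norm_eq_sqrt_inner)
      have "v /\<^sub>R norm v \<in> K" unfolding K_def using vW W nv
        by (simp add: subspace_scale)
      hence "f (v /\<^sub>R norm v) \<le> \<mu>" using umax \<mu>_def by blast
      moreover have "f (v /\<^sub>R norm v) = f v / (norm v)^2"
        unfolding f_def by (simp add: matrix_vector_mult_scaleR power2_eq_square field_simps)
      moreover have "(norm v)^2 = inner v v" by (simp add: power2_norm_eq_inner)
      ultimately have "f v \<le> \<mu> * inner v v" using vpos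
        by (simp add: divide_le_eq mult.commute)
      moreover have "f v = \<mu> + 2*t*a + t^2 * inner w (X *v w)"
      proof -
        have s: "inner u (X *v w) = inner w (X *v u)"
          using sym_inner[OF sym, of u w] by (simp add: inner_commute)
        show ?thesis unfolding f_def v_def \<mu>_def a_def
          by (simp add: matrix_vector_right_distrib matrix_vector_mult_scaleR
              inner_add_left inner_add_right s inner_commute power2_eq_square algebra_simps)
      qed
      ultimately show ?thesis unfolding vv b_def by (simp add: algebra_simps)
    qed
    then show ?thesis using quad_nonpos_imp a_def by blast
  qed
  define w0 where "w0 = X *v u - \<mu> *\<^sub>R u"
  have w0W: "w0 \<in> W" unfolding w0_def using uW inv W
    by (simp add: subspace_diff subspace_scale)
  have w0u: "inner w0 u = 0" unfolding w0_def \<mu>_def f_def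
    using uu by (simp add: inner_diff_left inner_diff_right inner_commute)
  have "inner w0 w0 = inner w0 (X *v u) - \<mu> * inner w0 u"
    unfolding w0_def by (simp add: inner_diff_right)
  also have "\<dots> = 0" using key[OF w0W w0u] w0u by simp
  finally have "w0 = 0" by simp
  then show ?thesis using uW nu unfolding w0_def \<mu>_def f_def by auto
qed

lemma sim_diag:
  fixes A :: "(real^'n^'n) set"
  assumes sym: "\<And>X. X \<in> A \<Longrightarrow> transpose X = X"
    and comm: "\<And>X Y. X \<in> A \<Longrightarrow> Y \<in> A \<Longrightarrow> X ** Y = Y ** X"
    and W: "subspace W" and inv: "\<And>X w. X \<in> A \<Longrightarrow> w \<in> W \<Longrightarrow> X *v w \<in> W"
  shows "\<exists>B. B \<subseteq> W \<and> pairwise orthogonal B \<and> (\<forall>u\<in>B. norm u = 1) \<and> span B = W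
           \<and> (\<forall>X\<in>A. \<forall>u\<in>B. X *v u = inner u (X *v u) *\<^sub>R u)"
  using W inv
proof (induction "dim W" arbitrary: W rule: less_induct)
  case less
  note WS = less.prems(1) and Winv = less.prems(2)
  show ?case
  proof (cases "\<forall>X\<in>A. \<exists>c. \<forall>w\<in>W. X *v w = c *\<^sub>R w")
    case True
    obtain B where B: "B \<subseteq> W" "pairwise orthogonal B" "\<And>x. x \<in> B \<Longrightarrow> norm x = 1"
      "span B = W" using orthonormal_basis_subspace[OF WS] by metis
    have "X *v u = inner u (X *v u) *\<^sub>R u" if "X \<in> A" "u \<in> B" for X u
    proof -
      obtain c where c: "\<forall>w\<in>W. X *v w = c *\<^sub>R w" using True \<open>X \<in> A\<close> by blast
      have uu: "inner u u = 1" using B(3)[OF \<open>u \<in> B\<close>] by (simp add: norm_eq_sqrt_inner)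
      have "X *v u = c *\<^sub>R u" using c B(1) \<open>u \<in> B\<close> by blast
      then show ?thesis using uu by simp
    qed
    then show ?thesis using B by blast
  next
    case False
    then obtain X where XA: "X \<in> A" and ns: "\<And>c. \<exists>w\<in>W. X *v w \<noteq> c *\<^sub>R w" by blast
    have "W \<noteq> {0}" using ns[of 0] by auto
    then obtain u where uW: "u \<in> W" and nu: "norm u = 1"
      and ue: "X *v u = inner u (X *v u) *\<^sub>R u"
      using sym_eigvec[OF sym[OF XA] WS Winv[OF XA]] by blast
    define \<mu> where "\<mu> = inner u (X *v u)"
    define W1 where "W1 = {w\<in>W. X *v w = \<mu> *\<^sub>R w}"
    define W2 where "W2 = {w\<in>W. \<forall>v\<in>W1. orthogonal w v}"
    have W1S: "subspace W1" unfolding W1_def using WS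
      by (auto simp: subspace_def matrix_vector_right_distrib matrix_vector_mult_scaleR
          scaleR_add_right)
    have W2S: "subspace W2" unfolding W2_def using WS
      by (auto simp: subspace_def orthogonal_clauses)
    have W1inv: "Y *v w \<in> W1" if "Y \<in> A" "w \<in> W1" for Y w
    proof -
      have "X *v (Y *v w) = (X ** Y) *v w" by (simp add: matrix_vector_mul_assoc)
      also have "\<dots> = Y *v (X *v w)" using comm[OF XA \<open>Y \<in> A\<close>] by (simp add: matrix_vector_mul_assoc)
      also have "\<dots> = \<mu> *\<^sub>R (Y *v w)" using \<open>w \<in> W1\<close> unfolding W1_def
        by (simp add: matrix_vector_mult_scaleR)
      finally show ?thesis using that Winv unfolding W1_def by auto
    qed
    have W2inv: "Y *v w \<in> W2" if "Y \<in> A" "w \<in> W2" for Y w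
    proof -
      have "orthogonal (Y *v w) v" if "v \<in> W1" for v
      proof -
        have "inner (Y *v w) v = inner w (Y *v v)" using sym_inner[OF sym[OF \<open>Y \<in> A\<close>]] by simp
        also have "\<dots> = 0" using \<open>w \<in> W2\<close> W1inv[OF \<open>Y \<in> A\<close> that] unfolding W2_def orthogonal_def
          by blast
        finally show ?thesis unfolding orthogonal_def .
      qed
      then show ?thesis using that Winv unfolding W2_def by auto
    qed
    have W1W: "W1 \<subseteq> W" and W2W: "W2 \<subseteq> W" unfolding W1_def W2_def by auto
    have uW1: "u \<in> W1" unfolding W1_def \<mu>_def using uW ue by simp
    have "W1 \<noteq> W" using ns[of \<mu>] unfolding W1_def by auto
    hence "dim W1 < dim W" using W1W W1S WS
      by (metis dim_psubset psubsetI span_eq_iff)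
    then obtain B1 where B1: "B1 \<subseteq> W1" "pairwise orthogonal B1" "\<forall>u\<in>B1. norm u = 1"
      "span B1 = W1" "\<forall>X\<in>A. \<forall>u\<in>B1. X *v u = inner u (X *v u) *\<^sub>R u"
      using less.hyps[OF _ W1S] W1inv by blast
    have "u \<notin> W2" using uW1 nu unfolding W2_def orthogonal_def by (auto intro!: bexI[of _ u] simp: norm_eq_sqrt_inner)
    hence "W2 \<noteq> W" using uW by auto
    hence "dim W2 < dim W" using W2W W2S WS
      by (metis dim_psubset psubsetI span_eq_iff)
    then obtain B2 where B2: "B2 \<subseteq> W2" "pairwise orthogonal B2" "\<forall>u\<in>B2. norm u = 1"
      "span B2 = W2" "\<forall>X\<in>A. \<forall>u\<in>B2. X *v u = inner u (X *v u) *\<^sub>R u"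
      using less.hyps[OF _ W2S] W2inv by blast
    have orth12: "orthogonal x y" if "x \<in> B1" "y \<in> B2" for x y
      using that B1(1) B2(1) unfolding W2_def by (metis (no_types, lifting) mem_Collect_eq orthogonal_commute subsetD)
    have po: "pairwise orthogonal (B1 \<union> B2)"
      using B1(2) B2(2) orth12 unfolding pairwise_def by (metis Un_iff orthogonal_commute)
    have sp: "span (B1 \<union> B2) = W"
    proof
      show "span (B1 \<union> B2) \<subseteq> W" using B1(1) B2(1) W1W W2W WS
        by (meson Un_least order_trans span_minimal)
    next
      show "W \<subseteq> span (B1 \<union> B2)"
      proof
        fix w assume wW: "w \<in> W"
        obtain y z where y: "y \<in> span W1" and z: "\<And>v. v \<in> span W1 \<Longrightarrow> orthogonal z v"
          and wyz: "w = y + z" using orthogonal_subspace_decomp_exists[of W1 w] by metis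
        have yW1: "y \<in> W1" using y W1S by (metis span_eq_iff)
        have "z = w - y" using wyz by simp
        hence "z \<in> W" using wW yW1 W1W WS by (simp add: subspace_diff subset_iff)
        hence "z \<in> W2" using z W1S span_superset unfolding W2_def by auto
        have "y \<in> span (B1 \<union> B2)" using yW1 B1(4) by (metis span_mono sup_ge1 subsetD)
        moreover have "z \<in> span (B1 \<union> B2)" using \<open>z \<in> W2\<close> B2(4) by (metis span_mono sup_ge2 subsetD)
        ultimately show "w \<in> span (B1 \<union> B2)" using wyz by (simp add: span_add)
      qed
    qed
    show ?thesis
      apply (rule exI[of _ "B1 \<union> B2"])
      using B1 B2 po sp W1W W2W by auto
  qed
qed


definition outer :: "real^'n \<Rightarrow> real^'n^'n" where
  "outer u = (\<chi> i j. u$i * u$j)"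

lemma outer_mv: "outer u *v x = inner u x *\<^sub>R u"
proof -
  have "(outer u *v x) $ i = (inner u x *\<^sub>R u) $ i" for i
  proof -
    have "(outer u *v x) $ i = (\<Sum>j\<in>UNIV. u$i * (u$j * x$j))"
      by (simp add: outer_def matrix_vector_mult_def mult.assoc)
    also have "\<dots> = u$i * (\<Sum>j\<in>UNIV. u$j * x$j)" by (simp add: sum_distrib_left)
    finally show ?thesis by (simp add: inner_vec_def mult.commute)
  qed
  then show ?thesis by (simp add: vec_eq_iff)
qed

lemma sum_mv: "(sum f S) *v (x::real^'n) = (\<Sum>u\<in>S. f u *v x)"
  by (induct S rule: infinite_finite_induct) (auto simp: matrix_vector_mult_add_rdistrib)

lemma scaleR_mv: "(c *\<^sub>R (M::real^'n^'m)) *v x = c *\<^sub>R (M *v x)"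
  by (simp add: scaleR_matrix_vector_assoc)

lemma onb_expand:
  fixes B :: "(real^'n) set"
  assumes fin: "finite B" and po: "pairwise orthogonal B" and n1: "\<And>u. u \<in> B \<Longrightarrow> norm u = 1"
    and sp: "span B = UNIV"
  shows "x = (\<Sum>u\<in>B. inner u x *\<^sub>R u)"
proof -
  define d where "d = x - (\<Sum>u\<in>B. inner u x *\<^sub>R u)"
  have dv: "orthogonal d v" if "v \<in> B" for v
  proof -
    have "inner v (\<Sum>u\<in>B. inner u x *\<^sub>R u) = (\<Sum>u\<in>B. inner u x * inner v u)"
      by (simp add: inner_sum_right)
    also have "\<dots> = (\<Sum>u\<in>B. if u = v then inner v x else 0)"
    proof (rule sum.cong)
      fix u assume "u \<in> B"
      show "inner u x * inner v u = (if u = v then inner v x else 0)"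
      proof (cases "u = v")
        case True
        then show ?thesis using n1[OF that] by (simp add: norm_eq_sqrt_inner)
      next
        case False
        then have "inner v u = 0" using pairwiseD[OF po that \<open>u \<in> B\<close>] unfolding orthogonal_def by auto
        then show ?thesis using False by simp
      qed
    qed simp
    also have "\<dots> = inner v x" using fin that by simp
    finally show ?thesis unfolding d_def orthogonal_def by (simp add: inner_diff_right inner_commute)
  qed
  have "orthogonal d d"
    by (rule orthogonal_to_span[of d B d]) (simp_all add: sp dv)
  then have "d = 0" by (simp only: orthogonal_self)
  then show ?thesis unfolding d_def by simp
qed

lemma eig_pow: "X *v u = l *\<^sub>R u \<Longrightarrow> matpow X k *v u = (l ^ k) *\<^sub>R u"
  by (induct k) (simp_all add: matrix_vector_mul_assoc[symmetric] matrix_vector_mult_scaleR)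

lemma mexp_formula:
  fixes B :: "(real^'n) set"
  assumes fin: "finite B" and po: "pairwise orthogonal B" and n1: "\<And>u. u \<in> B \<Longrightarrow> norm u = 1"
    and sp: "span B = UNIV" and eig: "\<And>u. u \<in> B \<Longrightarrow> X *v u = lam u *\<^sub>R u"
  shows "mexp X = (\<Sum>u\<in>B. exp (lam u) *\<^sub>R outer u)"
proof -
  have mp: "matpow X k = (\<Sum>u\<in>B. (lam u ^ k) *\<^sub>R outer u)" for k
    unfolding matrix_eq
  proof
    fix x
    have "matpow X k *v x = matpow X k *v (\<Sum>u\<in>B. inner u x *\<^sub>R u)"
      using onb_expand[OF fin po n1 sp] by metis
    also have "\<dots> = (\<Sum>u\<in>B. inner u x *\<^sub>R (matpow X k *v u))"
      by (simp add: linear_sum[OF matrix_vector_mul_linear] matrix_vector_mult_scaleR)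
    also have "\<dots> = (\<Sum>u\<in>B. ((lam u ^ k) *\<^sub>R outer u) *v x)"
      by (rule sum.cong) (simp_all add: eig_pow[OF eig] scaleR_mv outer_mv)
    finally show "matpow X k *v x = (\<Sum>u\<in>B. (lam u ^ k) *\<^sub>R outer u) *v x"
      by (simp add: sum_mv)
  qed
  have "(\<lambda>k. \<Sum>u\<in>B. (lam u ^ k /\<^sub>R fact k) *\<^sub>R outer u) sums (\<Sum>u\<in>B. exp (lam u) *\<^sub>R outer u)"
    by (intro sums_sum sums_scaleR_left exp_converges)
  moreover have "(\<lambda>k. \<Sum>u\<in>B. (lam u ^ k /\<^sub>R fact k) *\<^sub>R outer u) = (\<lambda>k. (1 / fact k) *\<^sub>R matpow X k)"
    by (simp add: mp scaleR_sum_right divide_inverse_commute)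
  ultimately have "(\<lambda>k. (1 / fact k) *\<^sub>R matpow X k) sums (\<Sum>u\<in>B. exp (lam u) *\<^sub>R outer u)"
    by simp
  then show ?thesis unfolding mexp_def by (rule sums_unique[symmetric])
qed

lemma mexp_inner:
  fixes B :: "(real^'n) set"
  assumes fin: "finite B" and po: "pairwise orthogonal B" and n1: "\<And>u. u \<in> B \<Longrightarrow> norm u = 1"
    and sp: "span B = UNIV" and eig: "\<And>u. u \<in> B \<Longrightarrow> X *v u = lam u *\<^sub>R u"
  shows "mexp X *v x = (\<Sum>u\<in>B. (exp (lam u) * inner u x) *\<^sub>R u)"
    and "v \<in> B \<Longrightarrow> inner v (mexp X *v x) = exp (lam v) * inner v x"
proof -
  show e: "mexp X *v x = (\<Sum>u\<in>B. (exp (lam u) * inner u x) *\<^sub>R u)"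
    by (simp add: mexp_formula[OF assms] sum_mv scaleR_mv outer_mv)
  assume v: "v \<in> B"
  have "inner v (mexp X *v x) = (\<Sum>u\<in>B. exp (lam u) * inner u x * inner v u)"
    unfolding e by (simp add: inner_sum_right)
  also have "\<dots> = (\<Sum>u\<in>B. if u = v then exp (lam v) * inner v x else 0)"
  proof (rule sum.cong)
    fix u assume "u \<in> B"
    show "exp (lam u) * inner u x * inner v u = (if u = v then exp (lam v) * inner v x else 0)"
    proof (cases "u = v")
      case True
      then show ?thesis using n1[OF v] by (simp add: norm_eq_sqrt_inner)
    next
      case False
      then have "inner v u = 0" using pairwiseD[OF po v \<open>u \<in> B\<close>] unfolding orthogonal_def by auto
      then show ?thesis using False by simp
    qed
  qed simp
  also have "\<dots> = exp (lam v) * inner v x" using fin v by simp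
  finally show "inner v (mexp X *v x) = exp (lam v) * inner v x" .
qed



lemma poly_sum: "finite S \<Longrightarrow> (\<And>i. i \<in> S \<Longrightarrow> f i \<in> poly_fun) \<Longrightarrow> (\<lambda>x. \<Sum>i\<in>S. f i x) \<in> poly_fun"
proof (induct S rule: finite_induct)
  case empty
  then show ?case using poly_fun.const[of 0] by simp
next
  case (insert a F)
  then have "(\<lambda>x. f a x + (\<Sum>i\<in>F. f i x)) \<in> poly_fun" by (intro poly_fun.add) auto
  then show ?case using insert by simp
qed

lemma inner_poly: "(\<lambda>x. inner u x) \<in> poly_fun"
proof -
  have "(\<lambda>x. \<Sum>i\<in>UNIV. u$i * x$i) \<in> poly_fun"
    by (rule poly_sum) (auto intro: poly_fun.mult poly_fun.const poly_fun.coord)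
  then show ?thesis by (simp add: inner_vec_def)
qed

lemma alg_union:
  assumes "real_algebraic_set S" "real_algebraic_set T"
  shows "real_algebraic_set (S \<union> T)"
proof -
  obtain P where P: "finite P" "P \<subseteq> poly_fun" "S = {x. \<forall>p\<in>P. p x = 0}"
    using assms(1) unfolding real_algebraic_set_def by blast
  obtain Q where Q: "finite Q" "Q \<subseteq> poly_fun" "T = {x. \<forall>p\<in>Q. p x = 0}"
    using assms(2) unfolding real_algebraic_set_def by blast
  define R where "R = (\<lambda>(p,q). \<lambda>x. p x * q x) ` (P \<times> Q)"
  have "finite R" unfolding R_def using P Q by simp
  moreover have "R \<subseteq> poly_fun" unfolding R_def using P Q by (auto intro: poly_fun.mult)
  moreover have "S \<union> T = {x. \<forall>r\<in>R. r x = 0}"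
    unfolding R_def P(3) Q(3) by auto
  ultimately show ?thesis unfolding real_algebraic_set_def by blast
qed

lemma alg_empty: "real_algebraic_set {}"
  unfolding real_algebraic_set_def
  by (rule exI[of _ "{\<lambda>x. 1}"]) (auto intro: poly_fun.const)

lemma alg_Union: "finite F \<Longrightarrow> (\<And>S. S \<in> F \<Longrightarrow> real_algebraic_set S) \<Longrightarrow> real_algebraic_set (\<Union>F)"
  by (induct F rule: finite_induct) (auto simp: alg_empty alg_union)

lemma alg_lin:
  assumes "finite U"
  shows "real_algebraic_set {x. \<forall>u\<in>U. inner u x = 0}"
  unfolding real_algebraic_set_def
  by (rule exI[of _ "(\<lambda>u x. inner u x) ` U"]) (auto simp: assms inner_poly)

lemma poly_cont: "p \<in> poly_fun \<Longrightarrow> continuous_on UNIV p"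
  by (induct p rule: poly_fun.induct) (auto intro!: continuous_intros)

lemma alg_closed:
  assumes "real_algebraic_set S" shows "closed S"
proof -
  obtain P where P: "finite P" "P \<subseteq> poly_fun" "S = {x. \<forall>p\<in>P. p x = 0}"
    using assms unfolding real_algebraic_set_def by blast
  have "S = (\<Inter>p\<in>P. {x. p x = 0})" using P(3) by auto
  moreover have "closed {x. p x = 0}" if "p \<in> P" for p
    using closed_Collect_eq[OF poly_cont continuous_on_const] that P(2) by blast
  ultimately show ?thesis by auto
qed



theorem mainTheorem5:
  fixes \<aa> :: "(real^'n^'n) set"
  assumes "subspace \<aa>"
    and "\<And>X. X \<in> \<aa> \<Longrightarrow> transpose X = X"
    and "\<And>X Y. X \<in> \<aa> \<Longrightarrow> Y \<in> \<aa> \<Longrightarrow> X ** Y = Y ** X"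
  shows "real_algebraic_set {x :: real^'n. 0 \<in> closure ((\<lambda>X. mexp X *v x) ` \<aa>)}
       \<and> closed {x :: real^'n. 0 \<in> closure ((\<lambda>X. mexp X *v x) ` \<aa>)}"
proof -
  have ex: "\<exists>B. B \<subseteq> UNIV \<and> pairwise orthogonal B \<and> (\<forall>u\<in>B. norm u = 1) \<and> span B = UNIV
           \<and> (\<forall>X\<in>\<aa>. \<forall>u\<in>B. X *v u = inner u (X *v u) *\<^sub>R u)"
    by (rule sim_diag[where A=\<aa> and W=UNIV]) (simp_all add: assms(2,3) subspace_UNIV)
  then obtain B where B: "pairwise orthogonal B" "\<forall>u\<in>B. norm u = 1" "span B = UNIV"
    "\<forall>X\<in>\<aa>. \<forall>u\<in>B. X *v u = inner u (X *v u) *\<^sub>R u"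
    by (elim exE conjE) (rule that)
  have n1: "\<And>u. u \<in> B \<Longrightarrow> norm u = 1" using B(2) by blast
  have "0 \<notin> B" using n1 by force
  then have fin: "finite B" using pairwise_orthogonal_independent[OF B(1)] finiteI_independent by blast
  define lam where "lam X u = inner u (X *v u)" for X :: "real^'n^'n" and u
  have eig: "\<And>u. u \<in> B \<Longrightarrow> X *v u = lam X u *\<^sub>R u" if "X \<in> \<aa>" for X
    using B(4) that unfolding lam_def by blast
  have mi1: "mexp X *v x = (\<Sum>u\<in>B. (exp (lam X u) * inner u x) *\<^sub>R u)" if "X \<in> \<aa>" for X x
    using mexp_inner(1)[OF fin B(1) n1 B(3) eig[OF that]] .
  have mi2: "inner v (mexp X *v x) = exp (lam X v) * inner v x" if "X \<in> \<aa>" "v \<in> B" for X x v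
    using mexp_inner(2)[OF fin B(1) n1 B(3) eig[OF that(1)] that(2)] .
  define Z where "Z = {x :: real^'n. 0 \<in> closure ((\<lambda>X. mexp X *v x) ` \<aa>)}"
  have Zc: "x \<in> Z \<longleftrightarrow> (\<forall>e>0. \<exists>X\<in>\<aa>. norm (mexp X *v x) < e)" for x
    unfolding Z_def closure_approachable by (auto simp: dist_norm)
  have mono: "x \<in> Z" if yZ: "y \<in> Z" and sub: "\<And>u. u \<in> B \<Longrightarrow> inner u y = 0 \<Longrightarrow> inner u x = 0" for x y
  proof -
    define K where "K = (\<Sum>u\<in>B. \<bar>inner u x\<bar> / \<bar>inner u y\<bar>)"
    have K0: "K \<ge> 0" unfolding K_def by (intro sum_nonneg) simp
    have bound: "norm (mexp X *v x) \<le> K * norm (mexp X *v y)" if XA: "X \<in> \<aa>" for X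
    proof -
      define N where "N = norm (mexp X *v y)"
      have "norm (mexp X *v x) \<le> (\<Sum>u\<in>B. norm ((exp (lam X u) * inner u x) *\<^sub>R u))"
        unfolding mi1[OF XA] by (rule norm_sum)
      also have "\<dots> = (\<Sum>u\<in>B. exp (lam X u) * \<bar>inner u x\<bar>)"
        by (rule sum.cong) (simp_all add: n1 abs_mult)
      also have "\<dots> \<le> (\<Sum>u\<in>B. \<bar>inner u x\<bar> / \<bar>inner u y\<bar> * N)"
      proof (rule sum_mono)
        fix u assume uB: "u \<in> B"
        show "exp (lam X u) * \<bar>inner u x\<bar> \<le> \<bar>inner u x\<bar> / \<bar>inner u y\<bar> * N"
        proof (cases "inner u y = 0")
          case True
          then show ?thesis using sub[OF uB] by simp
        next
          case False
          have "\<bar>inner u (mexp X *v y)\<bar> \<le> norm u * N"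
            unfolding N_def by (rule Cauchy_Schwarz_ineq2)
          then have c: "exp (lam X u) * \<bar>inner u y\<bar> \<le> N"
            using mi2[OF XA uB, of y] n1[OF uB] by (simp add: abs_mult)
          have "exp (lam X u) * \<bar>inner u x\<bar> = \<bar>inner u x\<bar> / \<bar>inner u y\<bar> * (exp (lam X u) * \<bar>inner u y\<bar>)"
            using False by (simp add: field_simps)
          also have "\<dots> \<le> \<bar>inner u x\<bar> / \<bar>inner u y\<bar> * N"
            by (rule mult_left_mono[OF c]) simp
          finally show ?thesis .
        qed
      qed
      also have "\<dots> = K * N" unfolding K_def by (simp add: sum_distrib_right)
      finally show ?thesis unfolding N_def .
    qed
    show ?thesis unfolding Zc
    proof (intro allI impI)
      fix e :: real assume e: "e > 0"
      then obtain X where XA: "X \<in> \<aa>" and Xs: "norm (mexp X *v y) < e / (K + 1)"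
        using yZ K0 unfolding Zc by (metis add_nonneg_pos divide_pos_pos zero_less_one)
      have "norm (mexp X *v x) \<le> K * norm (mexp X *v y)" by (rule bound[OF XA])
      also have "\<dots> \<le> (K + 1) * norm (mexp X *v y)" by (simp add: distrib_right)
      also have "\<dots> < (K + 1) * (e / (K + 1))"
        using Xs K0 by (intro mult_strict_left_mono) auto
      also have "\<dots> = e" using K0 by simp
      finally show "\<exists>X\<in>\<aa>. norm (mexp X *v x) < e" using XA by blast
    qed
  qed
  define F where "F = (\<lambda>x. {u\<in>B. inner u x \<noteq> 0}) ` Z"
  have finF: "finite F"
    by (rule finite_subset[of _ "Pow B"]) (auto simp: F_def fin)
  have Zeq: "Z = (\<Union>T\<in>F. {x. \<forall>u\<in>B - T. inner u x = 0})"
  proof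
    show "Z \<subseteq> (\<Union>T\<in>F. {x. \<forall>u\<in>B - T. inner u x = 0})"
      unfolding F_def by auto
  next
    show "(\<Union>T\<in>F. {x. \<forall>u\<in>B - T. inner u x = 0}) \<subseteq> Z"
    proof
      fix x assume "x \<in> (\<Union>T\<in>F. {x. \<forall>u\<in>B - T. inner u x = 0})"
      then obtain y where yZ: "y \<in> Z" and hx: "\<forall>u\<in>B - {u\<in>B. inner u y \<noteq> 0}. inner u x = 0"
        unfolding F_def by auto
      show "x \<in> Z" by (rule mono[OF yZ]) (use hx in auto)
    qed
  qed
  have alg: "real_algebraic_set Z"
    unfolding Zeq
    by (rule alg_Union) (auto simp: finF fin intro!: alg_lin)
  then show ?thesis using alg_closed[OF alg] unfolding Z_def by simp
qed

end
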